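(* Consider a solution as in the setting, defined for $R\in(R_0,\infty)$ (the full areal-coordinate covering of the maximal Cauchy development), and let $R_i\in(R_0,\infty)$. (1) If $\mathcal{E}(R_i)=0$ then $\mathcal{E}(R)=0$ for all $R\in(R_0,\infty)$. (2) If $\mathcal{E}(R_i)\neq 0$ then $\mathcal{E}(R)$ is nonincreasing in $R$ on $(R_0,\infty)$. (3) If $\mathcal{E}(R_i)\neq0$ and $K\neq0$ then $\mathcal{E}(R)$ is strictly decreasing in $R$ on $(R_0,\infty)$.
   Context: Setting. A smooth vacuum $T^2$ symmetric spacetime on $T^3\times I$ in areal coordinates $(\theta,x,y,R)$, $\theta\in S^1=\mathbb{R}/\mathbb{Z}$, with metric $g=e^{2(\nu-U)}(-\alpha\,dR^2+d\theta^2)+e^{2U}[dx+A\,dy+(G+AH)\,d\theta]^2+e^{-2U}R^2(dy+H\,d\theta)^2$, where $\alpha>0,\nu,U,A,G,H$ are smooth functions of $(\theta,R)$ only, periodic in $\theta$. The Killing fields $\partial_x,\partial_y$ are chosen so that the twist $\epsilon_{abcd}X^aY^b\nabla^cX^d$ vanishes ($X=\partial_x,Y=\partial_y$), and $K\ge0$ denotes the constant twist $\epsilon_{abcd}Y^aX^b\nabla^cY^d$. Set $\beta=\nu+\tfrac12\ln\alpha$. The vacuum equations are: $\beta_R=\sqrt{\alpha}Rh-\frac{e^{2\beta}K^2}{4R^3}$, $\beta_\theta=2R\big(U_RU_\theta+\frac{e^{4U}}{4R^2}A_RA_\theta\big)$, $\alpha_R=-\frac{\alpha e^{2\beta}K^2}{R^3}$,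 $U_{RR}-\alpha U_{\theta\theta}=-\frac{U_R}{R}+\frac{\alpha_RU_R}{2\alpha}+\frac{\alpha_\theta U_\theta}{2}+\frac{e^{4U}}{2R^2}(A_R^2-\alpha A_\theta^2)$, $A_{RR}-\alpha A_{\theta\theta}=\frac{A_R}{R}+\frac{\alpha_RA_R}{2\alpha}+\frac{\alpha_\theta A_\theta}{2}-4A_RU_R+4\alpha A_\theta U_\theta$, $G_R=-AH_R$, $H_R=\frac{e^{2\beta}K}{\sqrt{\alpha}R^3}$, with $h=\frac{U_R^2}{\sqrt\alpha}+\sqrt\alpha\,U_\theta^2+\frac{e^{4U}}{4R^2}\Big(\frac{A_R^2}{\sqrt\alpha}+\sqrt\alpha\,A_\theta^2\Big)$ and $\mathcal{E}(R)=\int_{S^1}h\,d\theta$. Solutions are uniquely determined by data at one time $R_i$. The maximal Cauchy development of such data is covered by these coordinates with $R\in(R_0,\infty)$ for some $R_0\ge0$. *)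

theory Defs
  imports "HOL-Analysis.Analysis"
begin

text \<open>Functions of the areal coordinates are modelled as functions of a pair (theta, R),
  theta the (periodic) angle and R the areal time.\<close>

definition dR :: "(real \<times> real \<Rightarrow> real) \<Rightarrow> real \<times> real \<Rightarrow> real" where
  "dR f p = deriv (\<lambda>r. f (fst p, r)) (snd p)"

definition dth :: "(real \<times> real \<Rightarrow> real) \<Rightarrow> real \<times> real \<Rightarrow> real" where
  "dth f p = deriv (\<lambda>t. f (t, snd p)) (fst p)"

text \<open>C^k on a set S (intended S open): all partial derivatives up to order k exist and are continuous.\<close>
fun Ck :: "nat \<Rightarrow> (real \<times> real) set \<Rightarrow> (real \<times> real \<Rightarrow> real) \<Rightarrow> bool" where
  "Ck 0 S f = continuous_on S f"
| "Ck (Suc k) S f =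
     (continuous_on S f \<and>
      (\<forall>p\<in>S. (\<lambda>r. f (fst p, r)) differentiable (at (snd p)) \<and>
              (\<lambda>t. f (t, snd p)) differentiable (at (fst p))) \<and>
      Ck k S (dR f) \<and> Ck k S (dth f))"

definition smooth2 :: "(real \<times> real) set \<Rightarrow> (real \<times> real \<Rightarrow> real) \<Rightarrow> bool" where
  "smooth2 S f \<longleftrightarrow> (\<forall>k. Ck k S f)"

definition hdens :: "(real \<times> real \<Rightarrow> real) \<Rightarrow> (real \<times> real \<Rightarrow> real) \<Rightarrow> (real \<times> real \<Rightarrow> real)
    \<Rightarrow> real \<times> real \<Rightarrow> real" where
  "hdens \<alpha> U A p =
     (dR U p)\<^sup>2 / sqrt (\<alpha> p) + sqrt (\<alpha> p) * (dth U p)\<^sup>2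
     + exp (4 * U p) / (4 * (snd p)\<^sup>2) * ((dR A p)\<^sup>2 / sqrt (\<alpha> p) + sqrt (\<alpha> p) * (dth A p)\<^sup>2)"

definition energy :: "(real \<times> real \<Rightarrow> real) \<Rightarrow> (real \<times> real \<Rightarrow> real) \<Rightarrow> (real \<times> real \<Rightarrow> real)
    \<Rightarrow> real \<Rightarrow> real" where
  "energy \<alpha> U A R = integral {0..1} (\<lambda>\<theta>. hdens \<alpha> U A (\<theta>, R))"

end

theory Submission
  imports Defs
begin

lemma sm_cont: "smooth2 S f \<Longrightarrow> continuous_on S f"
  unfolding smooth2_def by (metis Ck.simps(1))

lemma sm_dR: "smooth2 S f \<Longrightarrow> smooth2 S (dR f)"
  unfolding smooth2_def by (metis Ck.simps(2))

lemma sm_dth: "smooth2 S f \<Longrightarrow> smooth2 S (dth f)"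
  unfolding smooth2_def by (metis Ck.simps(2))

lemma sm_derR: assumes "smooth2 S f" "(t, r) \<in> S"
  shows "((\<lambda>r. f (t, r)) has_real_derivative dR f (t, r)) (at r)"
proof -
  have "Ck (Suc 0) S f" using assms(1) unfolding smooth2_def by blast
  then have "(\<lambda>r. f (t, r)) differentiable (at r)" using assms(2) by force
  then show ?thesis unfolding dR_def by (simp add: DERIV_deriv_iff_real_differentiable)
qed

lemma sm_derth: assumes "smooth2 S f" "(t, r) \<in> S"
  shows "((\<lambda>t. f (t, r)) has_real_derivative dth f (t, r)) (at t)"
proof -
  have "Ck (Suc 0) S f" using assms(1) unfolding smooth2_def by blast
  then have "(\<lambda>t. f (t, r)) differentiable (at t)" using assms(2) by force
  then show ?thesis unfolding dth_def by (simp add: DERIV_deriv_iff_real_differentiable)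
qed

lemma cont_swap:
  assumes "continuous_on (UNIV \<times> {R0<..}) g"
  shows "continuous_on ({R0<..} \<times> T) (\<lambda>(r, t). g (t, r))"
proof -
  have "continuous_on ({R0<..} \<times> T) (\<lambda>x. (snd x, fst x))"
    by (intro continuous_intros)
  moreover have "(\<lambda>x. (snd x, fst x)) ` ({R0<..} \<times> T) \<subseteq> UNIV \<times> {R0<..}" by auto
  ultimately have "continuous_on ({R0<..} \<times> T) (g \<circ> (\<lambda>x. (snd x, fst x)))"
    using continuous_on_compose continuous_on_subset assms by blast
  then show ?thesis by (simp add: o_def case_prod_beta)
qed

lemma cont_slice:
  assumes "continuous_on (UNIV \<times> {R0<..}) g" "R0 < r"
  shows "continuous_on T (\<lambda>t. g (t, r))"
proof -
  have "continuous_on T (\<lambda>t. (t, r))" by (intro continuous_intros)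
  moreover have "(\<lambda>t. (t, r)) ` T \<subseteq> UNIV \<times> {R0<..}" using assms(2) by auto
  moreover have "continuous_on ((\<lambda>t. (t, r)) ` T) g"
    by (rule continuous_on_subset[OF assms(1) calculation(2)])
  ultimately show ?thesis
    using continuous_on_compose[of T "\<lambda>t. (t, r)" g] by (simp add: o_def)
qed

lemma clairaut:
  assumes sm: "smooth2 (UNIV \<times> {R0<..}) f" and R: "R0 < R"
  shows "dth (dR f) (\<theta>, R) = dR (dth f) (\<theta>, R)"
proof -
  define a where "a = \<theta> - 1"
  define b where "b = \<theta> + 1"
  define D where "D = dR (dth f)"
  have smt: "smooth2 (UNIV \<times> {R0<..}) (dth f)" using sm_dth[OF sm] .
  have contD: "continuous_on (UNIV \<times> {R0<..}) D" unfolding D_def by (rule sm_cont[OF sm_dR[OF smt]])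
  have contT: "continuous_on (UNIV \<times> {R0<..}) (dth f)" by (rule sm_cont[OF smt])
  have ftc: "f (t, r) - f (a, r) = integral {a..t} (\<lambda>x. dth f (x, r))" if "a \<le> t" "R0 < r" for t r
  proof -
    have "((\<lambda>x. dth f (x, r)) has_integral (f (t, r) - f (a, r))) {a..t}"
      apply (rule fundamental_theorem_of_calculus[OF that(1)])
      using sm_derth[OF sm, of _ r] that(2)
      by (auto simp: has_real_derivative_iff_has_vector_derivative[symmetric] intro: has_field_derivative_at_within)
    then show ?thesis by (simp add: integral_unique)
  qed
  have hd: "dR f (t, R) - dR f (a, R) = integral {a..t} (\<lambda>x. D (x, R))" if "a \<le> t" for t
  proof -
    have d1: "((\<lambda>r. f (t, r) - f (a, r)) has_real_derivative dR f (t, R) - dR f (a, R)) (at R)"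
    proof -
      have "(t, R) \<in> UNIV \<times> {R0<..}" "(a, R) \<in> UNIV \<times> {R0<..}" using R by auto
      from DERIV_diff[OF sm_derR[OF sm this(1)] sm_derR[OF sm this(2)]] show ?thesis .
    qed
    have fx: "((\<lambda>r. dth f (x, r)) has_real_derivative D (x, r)) (at r within {R0<..})"
        if "r \<in> {R0<..}" for r x
        using sm_derR[OF smt, of x r] that unfolding D_def by (auto intro: has_field_derivative_at_within)
    have int: "(\<lambda>x. dth f (x, r)) integrable_on cbox a t" if "r \<in> {R0<..}" for r
      proof -
        have "continuous_on (cbox a t) (\<lambda>x. dth f (x, r))" by (rule cont_slice[OF contT]) (use that in simp)
        then show ?thesis by (rule integrable_continuous)
      qed
    have cont: "continuous_on ({R0<..} \<times> cbox a t) (\<lambda>(r, x). D (x, r))" by (rule cont_swap[OF contD])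
    have cvx: "convex {R0<..}" by (rule convex_real_interval)
    have RU: "R \<in> {R0<..}" using R by simp
    have d2: "((\<lambda>r. integral (cbox a t) (\<lambda>x. dth f (x, r))) has_real_derivative integral (cbox a t) (\<lambda>x. D (x, R))) (at R within {R0<..})"
      by (rule leibniz_rule_field_derivative[of "{R0<..}" a t "\<lambda>r x. dth f (x, r)" "\<lambda>r x. D (x, r)", OF fx int cont RU cvx])
    have d2': "((\<lambda>r. integral {a..t} (\<lambda>x. dth f (x, r))) has_real_derivative integral {a..t} (\<lambda>x. D (x, R))) (at R)"
      using d2[unfolded at_within_open[OF RU open_greaterThan] cbox_interval] .
    have d1': "((\<lambda>r. integral {a..t} (\<lambda>x. dth f (x, r))) has_real_derivative dR f (t, R) - dR f (a, R)) (at R)"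
    proof (rule has_field_derivative_transform_within_open[OF d1 open_greaterThan RU])
      fix x assume "x \<in> {R0<..}"
      then show "f (t, x) - f (a, x) = integral {a..t} (\<lambda>xa. dth f (xa, x))"
        by (intro ftc[OF that]) simp
    qed
    show ?thesis by (rule DERIV_unique[OF d1' d2'])
  qed
  have d3: "((\<lambda>t. dR f (a, R) + integral {a..t} (\<lambda>x. D (x, R))) has_real_derivative D (\<theta>, R)) (at \<theta>)"
  proof -
    have "((\<lambda>t. integral {a..t} (\<lambda>x. D (x, R))) has_real_derivative D (\<theta>, R)) (at \<theta> within {a..b})"
      by (rule integral_has_real_derivative[OF cont_slice[OF contD R]]) (auto simp: a_def b_def)
    then have "((\<lambda>t. integral {a..t} (\<lambda>x. D (x, R))) has_real_derivative D (\<theta>, R)) (at \<theta>)"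
      by (subst (asm) at_within_interior) (auto simp: a_def b_def)
    from DERIV_add[OF DERIV_const[of "dR f (a, R)" "at \<theta>"] this] show ?thesis by simp
  qed
  have d4: "((\<lambda>t. dR f (t, R)) has_real_derivative D (\<theta>, R)) (at \<theta>)"
  proof (rule has_field_derivative_transform_within_open[OF d3, of "{a<..}"])
    fix x assume "x \<in> {a<..}"
    then have "a \<le> x" by simp
    from hd[OF this] show "dR f (a, R) + integral {a..x} (\<lambda>x. D (x, R)) = dR f (x, R)" by simp
  qed (auto simp: a_def)
  show ?thesis unfolding D_def[symmetric] dth_def using DERIV_imp_deriv[OF d4] by simp
qed

lemma h_deriv_gen:
  fixes sq ff ur ut ar aT :: "real \<Rightarrow> real" and R sq' ff' ur' ut' ar' aT' :: real
  assumes dsq: "(sq has_real_derivative sq') (at R)"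
    and dff: "(ff has_real_derivative ff') (at R)"
    and dur: "(ur has_real_derivative ur') (at R)"
    and dut: "(ut has_real_derivative ut') (at R)"
    and dar: "(ar has_real_derivative ar') (at R)"
    and daT: "(aT has_real_derivative aT') (at R)"
    and pos: "sq R > 0"
  shows "((\<lambda>r. (ur r)\<^sup>2 / sq r + sq r * (ut r)\<^sup>2 + ff r * ((ar r)\<^sup>2 / sq r + sq r * (aT r)\<^sup>2))
     has_real_derivative
     (2 * ur R * ur' / sq R - (ur R)^2 * sq' / (sq R)^2 + sq' * (ut R)^2 + 2 * sq R * ut R * ut'
      + ff' * ((ar R)^2 / sq R + sq R * (aT R)^2)
      + ff R * (2 * ar R * ar' / sq R - (ar R)^2 * sq' / (sq R)^2 + sq' * (aT R)^2 + 2 * sq R * aT R * aT'))) (at R)"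
proof -
  have nz: "sq R \<noteq> 0" using pos by simp
  show ?thesis
  apply (rule DERIV_cong)
   apply (rule derivative_eq_intros dsq dff dur dut dar daT refl nz)+
  using pos by (simp add: field_simps power2_eq_square)
qed

lemma flux_deriv_gen:
  fixes sq ff ur ut ar aT :: "real \<Rightarrow> real" and R sq' ff' ur' ut' ar' aT' :: real
  assumes dsq: "(sq has_real_derivative sq') (at R)"
    and dff: "(ff has_real_derivative ff') (at R)"
    and dur: "(ur has_real_derivative ur') (at R)"
    and dut: "(ut has_real_derivative ut') (at R)"
    and dar: "(ar has_real_derivative ar') (at R)"
    and daT: "(aT has_real_derivative aT') (at R)"
  shows "((\<lambda>r. 2 * sq r * ut r * ur r + 2 * ff r * sq r * aT r * ar r)
     has_real_derivative
     (2 * sq' * ut R * ur R + 2 * sq R * ut' * ur R + 2 * sq R * ut R * ur'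
      + 2 * ff' * sq R * aT R * ar R + 2 * ff R * sq' * aT R * ar R + 2 * ff R * sq R * aT' * ar R
      + 2 * ff R * sq R * aT R * ar')) (at R)"
  apply (rule DERIV_cong)
   apply (rule derivative_eq_intros dsq dff dur dut dar daT refl)+
  by (simp add: algebra_simps)

lemma sqrt_deriv_gen:
  assumes "(al has_real_derivative al') (at R)" "al R > 0"
  shows "((\<lambda>r. sqrt (al r)) has_real_derivative al' / (2 * sqrt (al R))) (at R)"
proof -
  have "DERIV sqrt (al R) :> inverse (sqrt (al R)) / 2" by (rule DERIV_real_sqrt) (use assms in simp)
  from DERIV_chain2[OF this assms(1)] show ?thesis by (simp add: field_simps)
qed

lemma ffR_deriv_gen:
  assumes "(u has_real_derivative u') (at R)" "R > 0"
  shows "((\<lambda>r. exp (4 * u r) / (4 * r\<^sup>2)) has_real_derivative exp (4 * u R) / (4 * R\<^sup>2) * (4 * u' - 2 / R)) (at R)"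
proof -
  have nz: "4 * R\<^sup>2 \<noteq> 0" "R \<noteq> 0" using assms(2) by auto
  show ?thesis
  apply (rule DERIV_cong)
   apply (rule derivative_eq_intros assms(1) refl nz)+
  using assms(2) by (simp add: field_simps power2_eq_square power3_eq_cube)
qed

lemma ffth_deriv_gen:
  assumes "(u has_real_derivative u') (at t)" "R \<noteq> 0"
  shows "((\<lambda>t. exp (4 * u t) / (4 * R\<^sup>2)) has_real_derivative 4 * u' * (exp (4 * u t) / (4 * R\<^sup>2))) (at t)"
proof -
  have nz: "4 * R\<^sup>2 \<noteq> 0" "R \<noteq> 0" using assms(2) by auto
  show ?thesis
  apply (rule DERIV_cong)
   apply (rule derivative_eq_intros assms(1) refl nz)+
  using assms(2) by (simp add: field_simps)
qed

lemma alg2: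
  fixes sq R K b ur ut ar aT utR aTR utt aTT alt al alR urR arR urt art f u :: real
  assumes sq: "sq > 0" and R: "R > 0" and al: "sq^2 = al"
    and alR: "alR = - al * exp (2 * b) * K\<^sup>2 / R ^ 3"
    and f: "f = exp (4 * u) / (4 * R\<^sup>2)"
    and eU: "urR - al * utt = - ur / R + alR * ur / (2 * al) + alt * ut / 2
          + exp (4 * u) / (2 * R\<^sup>2) * (ar\<^sup>2 - al * aT\<^sup>2)"
    and eA: "arR - al * aTT = ar / R + alR * ar / (2 * al) + alt * aT / 2
          - 4 * ar * ur + 4 * al * aT * ut"
    and urt: "urt = utR" and art: "art = aTR"
  shows "2 * ur * urR / sq - ur^2 * (alR / (2 * sq)) / sq^2 + (alR / (2 * sq)) * ut^2 + 2 * sq * ut * utR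
      + f * (4 * ur - 2 / R) * (ar^2 / sq + sq * aT^2)
      + f * (2 * ar * arR / sq - ar^2 * (alR / (2 * sq)) / sq^2 + (alR / (2 * sq)) * aT^2 + 2 * sq * aT * aTR)
    = (2 * (alt / (2 * sq)) * ut * ur + 2 * sq * utt * ur + 2 * sq * ut * urt
       + 2 * (4 * ut * f) * sq * aT * ar + 2 * f * (alt / (2 * sq)) * aT * ar
       + 2 * f * sq * aTT * ar + 2 * f * sq * aT * art)
     - (2 / R * (ur^2 / sq + f * sq * aT^2)
        + exp (2 * b) * K^2 / (2 * R^3) * (ur^2 / sq + sq * ut^2 + f * (ar^2 / sq + sq * aT^2)))"
proof -
  have urR: "urR = sq^2 * utt + (- ur / R + alR * ur / (2 * sq^2) + alt * ut / 2
          + exp (4 * u) / (2 * R\<^sup>2) * (ar\<^sup>2 - sq^2 * aT\<^sup>2))" using eU al by simp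
  have arR: "arR = sq^2 * aTT + (ar / R + alR * ar / (2 * sq^2) + alt * aT / 2
          - 4 * ar * ur + 4 * sq^2 * aT * ut)" using eA al by simp
  have alR': "alR = - (sq^2) * exp (2 * b) * K\<^sup>2 / R ^ 3" using alR al by simp
  show ?thesis
    unfolding urR arR alR' f urt art
    using sq R by (simp add: field_simps power2_eq_square power3_eq_cube)
qed

lemma per_dR:
  assumes sm: "smooth2 (UNIV \<times> {R0<..}) f"
    and per: "\<And>\<theta> R. R0 < R \<Longrightarrow> f (\<theta> + 1, R) = f (\<theta>, R)" and R: "R0 < R"
  shows "dR f (\<theta> + 1, R) = dR f (\<theta>, R)"
proof -
  have d: "((\<lambda>r. f (\<theta>, r)) has_real_derivative dR f (\<theta>, R)) (at R)"
    using sm_derR[OF sm, of \<theta> R] R by simp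
  have "((\<lambda>r. f (\<theta> + 1, r)) has_real_derivative dR f (\<theta>, R)) (at R)"
  proof (rule has_field_derivative_transform_within_open[OF d open_greaterThan])
    show "R \<in> {R0<..}" using R by simp
    fix x assume "x \<in> {R0<..}"
    then show "f (\<theta>, x) = f (\<theta> + 1, x)" using per by simp
  qed
  then show ?thesis unfolding dR_def by (simp add: DERIV_imp_deriv)
qed

lemma per_dth:
  assumes sm: "smooth2 (UNIV \<times> {R0<..}) f"
    and per: "\<And>\<theta> R. R0 < R \<Longrightarrow> f (\<theta> + 1, R) = f (\<theta>, R)" and R: "R0 < R"
  shows "dth f (\<theta> + 1, R) = dth f (\<theta>, R)"
proof -
  have d1: "((\<lambda>t. f (t, R)) has_real_derivative dth f (\<theta> + 1, R)) (at (\<theta> + 1))"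
    using sm_derth[OF sm, of "\<theta> + 1" R] R by simp
  then have "((\<lambda>t. f (t + 1, R)) has_real_derivative dth f (\<theta> + 1, R)) (at \<theta>)"
    using DERIV_shift[of "\<lambda>t. f (t, R)"] by simp
  moreover have "(\<lambda>t. f (t + 1, R)) = (\<lambda>t. f (t, R))" using per R by auto
  ultimately have d2: "((\<lambda>t. f (t, R)) has_real_derivative dth f (\<theta> + 1, R)) (at \<theta>)" by simp
  have d3: "((\<lambda>t. f (t, R)) has_real_derivative dth f (\<theta>, R)) (at \<theta>)"
    using sm_derth[OF sm, of \<theta> R] R by simp
  show ?thesis using DERIV_unique[OF d2 d3] .
qed
lemma hX_bounds:
  fixes sq f a b c d :: real
  assumes "sq > 0" "f \<ge> 0"
  shows "0 \<le> a\<^sup>2 / sq + f * sq * d\<^sup>2"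
    and "a\<^sup>2 / sq + f * sq * d\<^sup>2 \<le> a\<^sup>2 / sq + sq * b\<^sup>2 + f * (c\<^sup>2 / sq + sq * d\<^sup>2)"
proof -
  have "0 \<le> a\<^sup>2 / sq" "0 \<le> f * sq * d\<^sup>2" "0 \<le> sq * b\<^sup>2" "0 \<le> f * (c\<^sup>2 / sq)"
    using assms by simp_all
  then show "0 \<le> a\<^sup>2 / sq + f * sq * d\<^sup>2"
    and "a\<^sup>2 / sq + f * sq * d\<^sup>2 \<le> a\<^sup>2 / sq + sq * b\<^sup>2 + f * (c\<^sup>2 / sq + sq * d\<^sup>2)"
    by (simp_all add: algebra_simps)
qed

lemma P_bounds:
  fixes X h R eb K R1 M :: real
  assumes X: "0 \<le> X" "X \<le> h" and R: "R > 0" and eb: "0 < eb"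
  shows "0 \<le> 2 / R * X + eb * K\<^sup>2 / (2 * R ^ 3) * h"
    and "eb * K\<^sup>2 / (2 * R ^ 3) * h \<le> 2 / R * X + eb * K\<^sup>2 / (2 * R ^ 3) * h"
    and "R1 > 0 \<Longrightarrow> R1 \<le> R \<Longrightarrow> eb \<le> M \<Longrightarrow>
         2 / R * X + eb * K\<^sup>2 / (2 * R ^ 3) * h \<le> (2 / R1 + M * K\<^sup>2 / (2 * R1 ^ 3)) * h"
proof -
  have h: "0 \<le> h" using X by linarith
  have a: "0 \<le> 2 / R * X" using X R by simp
  have b: "0 \<le> eb * K\<^sup>2 / (2 * R ^ 3) * h" using eb R h by simp
  show "0 \<le> 2 / R * X + eb * K\<^sup>2 / (2 * R ^ 3) * h" using a b by linarith
  show "eb * K\<^sup>2 / (2 * R ^ 3) * h \<le> 2 / R * X + eb * K\<^sup>2 / (2 * R ^ 3) * h" using a by linarith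
  assume R1: "R1 > 0" "R1 \<le> R" and M: "eb \<le> M"
  have "2 / R * X \<le> 2 / R * h" using X R by (intro mult_left_mono) simp_all
  also have "\<dots> \<le> 2 / R1 * h" using R1 R h by (intro mult_right_mono) (simp_all add: frac_le)
  finally have c1: "2 / R * X \<le> 2 / R1 * h" .
  have "R1 ^ 3 \<le> R ^ 3" using R1 by (simp add: power_mono)
  then have "eb * K\<^sup>2 / (2 * R ^ 3) \<le> M * K\<^sup>2 / (2 * R1 ^ 3)"
    using R1 M eb by (intro frac_le mult_right_mono) simp_all
  then have c2: "eb * K\<^sup>2 / (2 * R ^ 3) * h \<le> M * K\<^sup>2 / (2 * R1 ^ 3) * h"
    using h by (rule mult_right_mono)
  show "2 / R * X + eb * K\<^sup>2 / (2 * R ^ 3) * h \<le> (2 / R1 + M * K\<^sup>2 / (2 * R1 ^ 3)) * h"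
    using c1 c2 by (simp add: algebra_simps)
qed
theorem lemma1:
  fixes \<alpha> \<nu> U A G H \<beta> :: "real \<times> real \<Rightarrow> real" and K R0 Ri :: real
  assumes R0_nonneg: "R0 \<ge> 0"
    and K_nonneg: "K \<ge> 0"
    and Ri: "R0 < Ri"
    and smooth: "smooth2 (UNIV \<times> {R0<..}) \<alpha>" "smooth2 (UNIV \<times> {R0<..}) \<nu>"
      "smooth2 (UNIV \<times> {R0<..}) U" "smooth2 (UNIV \<times> {R0<..}) A"
      "smooth2 (UNIV \<times> {R0<..}) G" "smooth2 (UNIV \<times> {R0<..}) H"
    and periodic: "\<And>\<theta> R. R0 < R \<Longrightarrow>
        \<alpha> (\<theta> + 1, R) = \<alpha> (\<theta>, R) \<and> \<nu> (\<theta> + 1, R) = \<nu> (\<theta>, R) \<and>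
        U (\<theta> + 1, R) = U (\<theta>, R) \<and> A (\<theta> + 1, R) = A (\<theta>, R) \<and>
        G (\<theta> + 1, R) = G (\<theta>, R) \<and> H (\<theta> + 1, R) = H (\<theta>, R)"
    and alpha_pos: "\<And>\<theta> R. R0 < R \<Longrightarrow> \<alpha> (\<theta>, R) > 0"
    and beta_def: "\<beta> = (\<lambda>p. \<nu> p + ln (\<alpha> p) / 2)"
    and eq_betaR: "\<And>\<theta> R. R0 < R \<Longrightarrow>
        dR \<beta> (\<theta>, R) = sqrt (\<alpha> (\<theta>, R)) * R * hdens \<alpha> U A (\<theta>, R)
                         - exp (2 * \<beta> (\<theta>, R)) * K\<^sup>2 / (4 * R ^ 3)"
    and eq_betath: "\<And>\<theta> R. R0 < R \<Longrightarrow>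
        dth \<beta> (\<theta>, R) = 2 * R * (dR U (\<theta>, R) * dth U (\<theta>, R)
                         + exp (4 * U (\<theta>, R)) / (4 * R\<^sup>2) * dR A (\<theta>, R) * dth A (\<theta>, R))"
    and eq_alphaR: "\<And>\<theta> R. R0 < R \<Longrightarrow>
        dR \<alpha> (\<theta>, R) = - \<alpha> (\<theta>, R) * exp (2 * \<beta> (\<theta>, R)) * K\<^sup>2 / R ^ 3"
    and eq_U: "\<And>\<theta> R. R0 < R \<Longrightarrow>
        dR (dR U) (\<theta>, R) - \<alpha> (\<theta>, R) * dth (dth U) (\<theta>, R) =
          - dR U (\<theta>, R) / R + dR \<alpha> (\<theta>, R) * dR U (\<theta>, R) / (2 * \<alpha> (\<theta>, R))
          + dth \<alpha> (\<theta>, R) * dth U (\<theta>, R) / 2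
          + exp (4 * U (\<theta>, R)) / (2 * R\<^sup>2) * ((dR A (\<theta>, R))\<^sup>2 - \<alpha> (\<theta>, R) * (dth A (\<theta>, R))\<^sup>2)"
    and eq_A: "\<And>\<theta> R. R0 < R \<Longrightarrow>
        dR (dR A) (\<theta>, R) - \<alpha> (\<theta>, R) * dth (dth A) (\<theta>, R) =
          dR A (\<theta>, R) / R + dR \<alpha> (\<theta>, R) * dR A (\<theta>, R) / (2 * \<alpha> (\<theta>, R))
          + dth \<alpha> (\<theta>, R) * dth A (\<theta>, R) / 2
          - 4 * dR A (\<theta>, R) * dR U (\<theta>, R) + 4 * \<alpha> (\<theta>, R) * dth A (\<theta>, R) * dth U (\<theta>, R)"
    and eq_G: "\<And>\<theta> R. R0 < R \<Longrightarrow> dR G (\<theta>, R) = - A (\<theta>, R) * dR H (\<theta>, R)"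
    and eq_H: "\<And>\<theta> R. R0 < R \<Longrightarrow>
        dR H (\<theta>, R) = exp (2 * \<beta> (\<theta>, R)) * K / (sqrt (\<alpha> (\<theta>, R)) * R ^ 3)"
  shows "(energy \<alpha> U A Ri = 0 \<longrightarrow> (\<forall>R. R0 < R \<longrightarrow> energy \<alpha> U A R = 0))
       \<and> (energy \<alpha> U A Ri \<noteq> 0 \<longrightarrow>
            (\<forall>R1 R2. R0 < R1 \<and> R1 \<le> R2 \<longrightarrow> energy \<alpha> U A R2 \<le> energy \<alpha> U A R1))
       \<and> (energy \<alpha> U A Ri \<noteq> 0 \<and> K \<noteq> 0 \<longrightarrow>
            (\<forall>R1 R2. R0 < R1 \<and> R1 < R2 \<longrightarrow> energy \<alpha> U A R2 < energy \<alpha> U A R1))"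
proof -
  have Rpos: "\<And>R. R0 < R \<Longrightarrow> R > 0" using R0_nonneg by linarith
  have mem: "\<And>\<theta> R. R0 < R \<Longrightarrow> (\<theta>, R) \<in> UNIV \<times> {R0<..}" by simp
  have spos: "\<And>\<theta> R. R0 < R \<Longrightarrow> sqrt (\<alpha> (\<theta>, R)) > 0" using alpha_pos by simp
  have smUR: "smooth2 (UNIV \<times> {R0<..}) (dR U)" and smUt: "smooth2 (UNIV \<times> {R0<..}) (dth U)"
    and smAR: "smooth2 (UNIV \<times> {R0<..}) (dR A)" and smAt: "smooth2 (UNIV \<times> {R0<..}) (dth A)"
    using sm_dR sm_dth smooth by blast+
  define Fth where "Fth = (\<lambda>p. 2 * (dth \<alpha> p / (2 * sqrt (\<alpha> p))) * dth U p * dR U p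
      + 2 * sqrt (\<alpha> p) * dth (dth U) p * dR U p + 2 * sqrt (\<alpha> p) * dth U p * dth (dR U) p
      + 2 * (4 * dth U p * (exp (4 * U p) / (4 * (snd p)\<^sup>2))) * sqrt (\<alpha> p) * dth A p * dR A p
      + 2 * (exp (4 * U p) / (4 * (snd p)\<^sup>2)) * (dth \<alpha> p / (2 * sqrt (\<alpha> p))) * dth A p * dR A p
      + 2 * (exp (4 * U p) / (4 * (snd p)\<^sup>2)) * sqrt (\<alpha> p) * dth (dth A) p * dR A p
      + 2 * (exp (4 * U p) / (4 * (snd p)\<^sup>2)) * sqrt (\<alpha> p) * dth A p * dth (dR A) p)"
  define P where "P = (\<lambda>p. 2 / snd p * ((dR U p)^2 / sqrt (\<alpha> p)
      + exp (4 * U p) / (4 * (snd p)\<^sup>2) * sqrt (\<alpha> p) * (dth A p)^2)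
      + exp (2 * \<beta> p) * K^2 / (2 * (snd p)^3) * hdens \<alpha> U A p)"
  define Fl where "Fl = (\<lambda>p. 2 * sqrt (\<alpha> p) * dth U p * dR U p
      + 2 * (exp (4 * U p) / (4 * (snd p)\<^sup>2)) * sqrt (\<alpha> p) * dth A p * dR A p)"
  define E where "E = energy \<alpha> U A"

  have hR: "((\<lambda>r. hdens \<alpha> U A (\<theta>, r)) has_real_derivative Fth (\<theta>, R) - P (\<theta>, R)) (at R)"
    if R: "R0 < R" for \<theta> R
  proof -
    note m = mem[OF R, of \<theta>]
    note dsq = sqrt_deriv_gen[OF sm_derR[OF smooth(1) m] alpha_pos[OF R]]
    note dff = ffR_deriv_gen[OF sm_derR[OF smooth(3) m] Rpos[OF R]]
    note dur = sm_derR[OF smUR m]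
    note dut = sm_derR[OF smUt m]
    note dar = sm_derR[OF smAR m]
    note daT = sm_derR[OF smAt m]
    show ?thesis
      unfolding hdens_def prod.sel
      apply (rule DERIV_cong[OF h_deriv_gen[OF dsq dff dur dut dar daT spos[OF R]]])
      unfolding Fth_def P_def hdens_def prod.sel
      apply (rule alg2[where u = "U (\<theta>, R)" and al = "\<alpha> (\<theta>, R)"])
      using spos[OF R] Rpos[OF R] alpha_pos[of R \<theta>, OF R] less_imp_le[OF alpha_pos[of R \<theta>, OF R]]
        eq_alphaR[of R \<theta>, OF R] eq_U[of R \<theta>, OF R] eq_A[of R \<theta>, OF R]
        clairaut[OF smooth(3) R, of \<theta>] clairaut[OF smooth(4) R, of \<theta>] by auto
  qed

  have fl: "((\<lambda>t. Fl (t, R)) has_real_derivative Fth (t, R)) (at t)"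
    if R: "R0 < R" for t R
  proof -
    note m = mem[OF R, of t]
    note dsq = sqrt_deriv_gen[OF sm_derth[OF smooth(1) m] alpha_pos[OF R]]
    have Rnz: "R \<noteq> 0" using Rpos[OF R] by simp
    note dff = ffth_deriv_gen[OF sm_derth[OF smooth(3) m] Rnz]
    note dur = sm_derth[OF smUR m]
    note dut = sm_derth[OF smUt m]
    note dar = sm_derth[OF smAR m]
    note daT = sm_derth[OF smAt m]
    show ?thesis
      unfolding Fl_def prod.sel
      apply (rule DERIV_cong[OF flux_deriv_gen[OF dsq dff dur dut dar daT]])
      unfolding Fth_def prod.sel by simp
  qed
  let ?S = "UNIV \<times> {R0<..} :: (real \<times> real) set"
  have c\<alpha>: "continuous_on ?S \<alpha>" by (rule sm_cont[OF smooth(1)])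
  have c\<alpha>t: "continuous_on ?S (dth \<alpha>)" by (rule sm_cont[OF sm_dth[OF smooth(1)]])
  have c\<nu>: "continuous_on ?S \<nu>" by (rule sm_cont[OF smooth(2)])
  have cU: "continuous_on ?S U" by (rule sm_cont[OF smooth(3)])
  have cA: "continuous_on ?S A" by (rule sm_cont[OF smooth(4)])
  have cUR: "continuous_on ?S (dR U)" by (rule sm_cont[OF smUR])
  have cUt: "continuous_on ?S (dth U)" by (rule sm_cont[OF smUt])
  have cAR: "continuous_on ?S (dR A)" by (rule sm_cont[OF smAR])
  have cAt: "continuous_on ?S (dth A)" by (rule sm_cont[OF smAt])
  have cUtt: "continuous_on ?S (dth (dth U))" by (rule sm_cont[OF sm_dth[OF smUt]])
  have cURt: "continuous_on ?S (dth (dR U))" by (rule sm_cont[OF sm_dth[OF smUR]])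
  have cAtt: "continuous_on ?S (dth (dth A))" by (rule sm_cont[OF sm_dth[OF smAt]])
  have cARt: "continuous_on ?S (dth (dR A))" by (rule sm_cont[OF sm_dth[OF smAR]])
  have apos': "\<forall>p\<in>?S. \<alpha> p > 0" using alpha_pos by auto
  have anz: "\<forall>p\<in>?S. \<alpha> p \<noteq> 0"
  proof
    fix p assume "p \<in> ?S"
    then show "\<alpha> p \<noteq> 0" using apos' by (metis less_irrefl)
  qed
  have snz: "\<forall>p\<in>?S. sqrt (\<alpha> p) \<noteq> 0" using anz by simp
  have rnz: "\<forall>p\<in>?S. snd p \<noteq> 0" "\<forall>p\<in>?S. 4 * (snd p)\<^sup>2 \<noteq> 0"  "\<forall>p\<in>?S. 2 * (snd p)^3 \<noteq> 0"
    "\<forall>p\<in>?S. 2 * sqrt (\<alpha> p) \<noteq> 0"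
    using Rpos alpha_pos by (auto simp: less_imp_neq[symmetric])
  have csq: "continuous_on ?S (\<lambda>p. sqrt (\<alpha> p))" by (intro continuous_intros c\<alpha>)
  have cff: "continuous_on ?S (\<lambda>p. exp (4 * U p) / (4 * (snd p)\<^sup>2))"
    by (intro continuous_intros cU rnz)
  have c\<beta>: "continuous_on ?S \<beta>" unfolding beta_def by (intro continuous_intros c\<nu> c\<alpha> anz) simp
  have ch: "continuous_on ?S (hdens \<alpha> U A)"
    unfolding hdens_def[abs_def] by (intro continuous_intros c\<alpha> cU cUR cUt cAR cAt snz rnz)
  have cFth: "continuous_on ?S Fth"
    unfolding Fth_def by (intro continuous_intros c\<alpha> cU c\<alpha>t cUR cUt cAR cAt cUtt cURt cAtt cARt snz rnz)
  have cP: "continuous_on ?S P"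
    unfolding P_def by (intro continuous_intros c\<alpha> cU cUR cAt snz rnz c\<beta> ch)
  have cHR: "continuous_on ?S (\<lambda>p. Fth p - P p)" by (intro continuous_intros cFth cP)
  have per\<alpha>: "\<And>\<theta> R. R0 < R \<Longrightarrow> \<alpha> (\<theta> + 1, R) = \<alpha> (\<theta>, R)" using periodic by blast
  have perU: "\<And>\<theta> R. R0 < R \<Longrightarrow> U (\<theta> + 1, R) = U (\<theta>, R)" using periodic by blast
  have perA: "\<And>\<theta> R. R0 < R \<Longrightarrow> A (\<theta> + 1, R) = A (\<theta>, R)" using periodic by blast
  have int_slice: "(\<lambda>\<theta>. g (\<theta>, R)) integrable_on {0..1}" if "continuous_on ?S g" "R0 < R" for g :: "real \<times> real \<Rightarrow> real" and R
  proof -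
    have "continuous_on {0..1} (\<lambda>\<theta>. g (\<theta>, R))" by (rule cont_slice[OF that])
    then show ?thesis by (rule integrable_continuous_interval)
  qed
  have intFth: "integral {0..1} (\<lambda>t. Fth (t, R)) = 0" if R: "R0 < R" for R
  proof -
    have "((\<lambda>t. Fth (t, R)) has_integral (Fl (1, R) - Fl (0, R))) {0..1}"
    proof (rule fundamental_theorem_of_calculus)
      fix x :: real assume "x \<in> {0..1}"
      show "((\<lambda>t. Fl (t, R)) has_vector_derivative Fth (x, R)) (at x within {0..1})"
        using fl[OF R, of x] unfolding has_real_derivative_iff_has_vector_derivative[symmetric]
        by (rule has_field_derivative_at_within)
    qed simp
    moreover have "Fl (1, R) = Fl (0, R)"
      using per\<alpha>[OF R, of 0] perU[OF R, of 0] perA[OF R, of 0]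
        per_dR[OF smooth(3) perU R, of 0] per_dth[OF smooth(3) perU R, of 0]
        per_dR[OF smooth(4) perA R, of 0] per_dth[OF smooth(4) perA R, of 0]
      unfolding Fl_def by simp
    ultimately show ?thesis by (simp add: integral_unique)
  qed
  have Efun: "E = (\<lambda>r. integral {0..1} (\<lambda>\<theta>. hdens \<alpha> U A (\<theta>, r)))"
    unfolding E_def energy_def by (rule ext) (rule refl)
  have dE: "(E has_real_derivative - integral {0..1} (\<lambda>\<theta>. P (\<theta>, R))) (at R)" if R: "R0 < R" for R
  proof -
    have fx: "((\<lambda>r. hdens \<alpha> U A (\<theta>, r)) has_real_derivative Fth (\<theta>, r) - P (\<theta>, r)) (at r within {R0<..})"
      if "r \<in> {R0<..}" for r \<theta>
      using hR[of r \<theta>] that by (auto intro: has_field_derivative_at_within)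
    have int: "(\<lambda>\<theta>. hdens \<alpha> U A (\<theta>, r)) integrable_on cbox 0 1" if "r \<in> {R0<..}" for r
      using int_slice[OF ch, of r] that by (simp add: cbox_interval)
    have cont: "continuous_on ({R0<..} \<times> cbox 0 1) (\<lambda>(r, \<theta>). Fth (\<theta>, r) - P (\<theta>, r))"
      using cont_swap[OF cHR] .
    have RU: "R \<in> {R0<..}" using R by simp
    have cvx: "convex {R0<..}" by (rule convex_real_interval)
    have d: "((\<lambda>r. integral (cbox 0 1) (\<lambda>\<theta>. hdens \<alpha> U A (\<theta>, r))) has_real_derivative
        integral (cbox 0 1) (\<lambda>\<theta>. Fth (\<theta>, R) - P (\<theta>, R))) (at R within {R0<..})"
      by (rule leibniz_rule_field_derivative[of "{R0<..}" 0 1 "\<lambda>r \<theta>. hdens \<alpha> U A (\<theta>, r)"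
            "\<lambda>r \<theta>. Fth (\<theta>, r) - P (\<theta>, r)", OF fx int cont RU cvx])
    have "integral {0..1} (\<lambda>\<theta>. Fth (\<theta>, R) - P (\<theta>, R))
        = integral {0..1} (\<lambda>\<theta>. Fth (\<theta>, R)) - integral {0..1} (\<lambda>\<theta>. P (\<theta>, R))"
      by (rule integral_diff[OF int_slice[OF cFth R] int_slice[OF cP R]])
    also have "\<dots> = - integral {0..1} (\<lambda>\<theta>. P (\<theta>, R))" using intFth[OF R] by simp
    finally have eq: "integral {0..1} (\<lambda>\<theta>. Fth (\<theta>, R) - P (\<theta>, R)) = - integral {0..1} (\<lambda>\<theta>. P (\<theta>, R))" .
    show ?thesis
      using d[unfolded at_within_open[OF RU open_greaterThan] cbox_interval eq] unfolding Efun .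
  qed
  define Xf where "Xf = (\<lambda>p. (dR U p)^2 / sqrt (\<alpha> p)
      + exp (4 * U p) / (4 * (snd p)\<^sup>2) * sqrt (\<alpha> p) * (dth A p)^2)"
  have Pform: "P (\<theta>, R) = 2 / R * Xf (\<theta>, R) + exp (2 * \<beta> (\<theta>, R)) * K\<^sup>2 / (2 * R ^ 3) * hdens \<alpha> U A (\<theta>, R)"
    for \<theta> R unfolding P_def Xf_def by simp
  have Xb: "0 \<le> Xf (\<theta>, R)" "Xf (\<theta>, R) \<le> hdens \<alpha> U A (\<theta>, R)" if R: "R0 < R" for \<theta> R
  proof -
    have ffnn: "0 \<le> exp (4 * U (\<theta>, R)) / (4 * R\<^sup>2)" by simp
    show "0 \<le> Xf (\<theta>, R)" unfolding Xf_def prod.sel by (rule hX_bounds(1)[OF spos[OF R] ffnn])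
    show "Xf (\<theta>, R) \<le> hdens \<alpha> U A (\<theta>, R)" unfolding Xf_def hdens_def prod.sel
      by (rule hX_bounds(2)[OF spos[OF R] ffnn])
  qed
  have hnn: "0 \<le> hdens \<alpha> U A (\<theta>, R)" if "R0 < R" for \<theta> R
    using Xb[OF that, of \<theta>] by linarith
  have Pnn: "0 \<le> P (\<theta>, R)" if R: "R0 < R" for \<theta> R
    unfolding Pform by (rule P_bounds(1)[OF Xb[OF R] Rpos[OF R] exp_gt_zero])
  have Plb: "exp (2 * \<beta> (\<theta>, R)) * K\<^sup>2 / (2 * R ^ 3) * hdens \<alpha> U A (\<theta>, R) \<le> P (\<theta>, R)"
    if R: "R0 < R" for \<theta> R
    unfolding Pform by (rule P_bounds(2)[OF Xb[OF R] Rpos[OF R] exp_gt_zero])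
  have Pub: "P (\<theta>, R) \<le> (2 / R1 + M * K\<^sup>2 / (2 * R1 ^ 3)) * hdens \<alpha> U A (\<theta>, R)"
    if R: "R0 < R1" "R1 \<le> R" "exp (2 * \<beta> (\<theta>, R)) \<le> M" for \<theta> R R1 M
  proof -
    have R': "R0 < R" using R by linarith
    show ?thesis unfolding Pform
      by (rule P_bounds(3)[OF Xb[OF R'] Rpos[OF R'] exp_gt_zero Rpos[OF R(1)] R(2) R(3)])
  qed
  have Enn: "0 \<le> E R" if "R0 < R" for R
    unfolding Efun by (rule integral_nonneg[OF int_slice[OF ch that]]) (use hnn[OF that] in simp)
  have intPnn: "0 \<le> integral {0..1} (\<lambda>\<theta>. P (\<theta>, R))" if "R0 < R" for R
    by (rule integral_nonneg[OF int_slice[OF cP that]]) (use Pnn[OF that] in simp)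
  have Econt: "continuous_on {R1..R2} E" if "R0 < R1" for R1 R2
  proof (rule continuous_at_imp_continuous_on, rule ballI)
    fix x assume "x \<in> {R1..R2}"
    then have "R0 < x" using that by simp
    from DERIV_isCont[OF dE[OF this]] show "isCont E x" .
  qed
  have mono: "E R2 \<le> E R1" if "R0 < R1" "R1 \<le> R2" for R1 R2
  proof (rule DERIV_nonpos_imp_decreasing_open[OF that(2) _ Econt[OF that(1)]])
    fix x assume "R1 < x" "x < R2"
    then have x: "R0 < x" using that by simp
    show "\<exists>y. (E has_real_derivative y) (at x) \<and> y \<le> 0"
      using dE[OF x] intPnn[OF x] by (intro exI[of _ "- integral {0..1} (\<lambda>\<theta>. P (\<theta>, x))"]) simp
  qed
  have zero: "E R = 0" if Rb: "R0 < Rb" "E Rb = 0" and R: "R0 < R" for Rb R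
  proof (cases "Rb \<le> R")
    case True
    then show ?thesis using mono[OF Rb(1) True] Rb(2) Enn[OF R] by simp
  next
    case False
    then have RRb: "R < Rb" by simp
    let ?K2 = "{0..1} \<times> {R..Rb} :: (real \<times> real) set"
    have sub: "?K2 \<subseteq> ?S" using R by auto
    have "continuous_on ?K2 (\<lambda>p. exp (2 * \<beta> p))"
      by (rule continuous_on_subset[OF _ sub]) (intro continuous_intros c\<beta>)
    moreover have "compact ?K2" by (intro compact_Times compact_Icc)
    moreover have "?K2 \<noteq> {}" using RRb by auto
    ultimately obtain pm where "pm \<in> ?K2" and pm: "\<forall>p\<in>?K2. exp (2 * \<beta> p) \<le> exp (2 * \<beta> pm)"
      using continuous_attains_sup[of ?K2 "\<lambda>p. exp (2 * \<beta> p)"] by blast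
    define M where "M = exp (2 * \<beta> pm)"
    define C where "C = 2 / R + M * K\<^sup>2 / (2 * R ^ 3)"
    have cCh: "continuous_on ?S (\<lambda>p. C * hdens \<alpha> U A p)" by (intro continuous_intros ch)
    have bnd: "integral {0..1} (\<lambda>\<theta>. P (\<theta>, r)) \<le> C * E r" if r: "R \<le> r" "r \<le> Rb" for r
    proof -
      have r0: "R0 < r" using r R by simp
      have "integral {0..1} (\<lambda>\<theta>. P (\<theta>, r)) \<le> integral {0..1} (\<lambda>\<theta>. C * hdens \<alpha> U A (\<theta>, r))"
      proof (rule integral_le[OF int_slice[OF cP r0] int_slice[OF cCh r0]])
        fix \<theta> :: real assume "\<theta> \<in> {0..1}"
        then have "exp (2 * \<beta> (\<theta>, r)) \<le> M" using pm r unfolding M_def by auto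
        then show "P (\<theta>, r) \<le> C * hdens \<alpha> U A (\<theta>, r)"
          unfolding C_def using Pub[OF R r(1)] by blast
      qed
      also have "\<dots> = C * E r" unfolding Efun by simp
      finally show ?thesis .
    qed
    define g where "g = (\<lambda>r. E r * exp (C * r))"
    have dg: "(g has_real_derivative (- integral {0..1} (\<lambda>\<theta>. P (\<theta>, x)) * exp (C * x) + exp (C * x) * C * E x)) (at x)"
      if "R0 < x" for x
    proof -
      have de: "((\<lambda>r. exp (C * r)) has_real_derivative exp (C * x) * C) (at x)"
        using DERIV_chain2[OF DERIV_exp DERIV_cmult_Id[of C x]] by (simp add: mult.commute)
      show ?thesis unfolding g_def using DERIV_mult[OF dE[OF that] de] by simp
    qed
    have "g R \<le> g Rb"
    proof (rule DERIV_nonneg_imp_increasing_open[OF less_imp_le[OF RRb]])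
      fix x assume x: "R < x" "x < Rb"
      then have x0: "R0 < x" using R by simp
      have "integral {0..1} (\<lambda>\<theta>. P (\<theta>, x)) \<le> C * E x" using bnd x by simp
      then have "0 \<le> exp (C * x) * (C * E x - integral {0..1} (\<lambda>\<theta>. P (\<theta>, x)))" by simp
      then have "0 \<le> - integral {0..1} (\<lambda>\<theta>. P (\<theta>, x)) * exp (C * x) + exp (C * x) * C * E x"
        by (simp add: algebra_simps)
      then show "\<exists>y. (g has_real_derivative y) (at x) \<and> 0 \<le> y" using dg[OF x0] by blast
    next
      show "continuous_on {R..Rb} g"
      proof (rule continuous_at_imp_continuous_on, rule ballI)
        fix x assume "x \<in> {R..Rb}"
        then have "R0 < x" using R by simp
        from DERIV_isCont[OF dg[OF this]] show "isCont g x" .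
      qed
    qed
    then have "E R * exp (C * R) \<le> 0" unfolding g_def using Rb(2) by simp
    then have "E R \<le> 0" by (simp add: mult_le_0_iff)
    then show ?thesis using Enn[OF R] by simp
  qed
  have strict: "E R2 < E R1" if K: "K \<noteq> 0" and pos: "\<And>R. R0 < R \<Longrightarrow> 0 < E R"
    and R: "R0 < R1" "R1 < R2" for R1 R2
  proof (rule DERIV_neg_imp_decreasing_open[OF R(2) _ Econt[OF R(1)]])
    fix x assume "R1 < x" "x < R2"
    then have x: "R0 < x" using R by simp
    have "continuous_on {0..1} (\<lambda>\<theta>. exp (2 * \<beta> (\<theta>, x)))"
      by (rule cont_slice[OF _ x]) (intro continuous_intros c\<beta>)
    then obtain tm where "tm \<in> {0..1::real}" and tm: "\<forall>t\<in>{0..1}. exp (2 * \<beta> (tm, x)) \<le> exp (2 * \<beta> (t, x))"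
      using continuous_attains_inf[of "{0..1::real}" "\<lambda>\<theta>. exp (2 * \<beta> (\<theta>, x))"] by auto
    define m where "m = exp (2 * \<beta> (tm, x))"
    define c where "c = m * K\<^sup>2 / (2 * x ^ 3)"
    have cpos: "c > 0" unfolding c_def m_def using K Rpos[OF x] by simp
    have cCh: "continuous_on ?S (\<lambda>p. c * hdens \<alpha> U A p)" by (intro continuous_intros ch)
    have "integral {0..1} (\<lambda>\<theta>. c * hdens \<alpha> U A (\<theta>, x)) \<le> integral {0..1} (\<lambda>\<theta>. P (\<theta>, x))"
    proof (rule integral_le[OF int_slice[OF cCh x] int_slice[OF cP x]])
      fix \<theta> :: real assume th: "\<theta> \<in> {0..1}"
      have "m \<le> exp (2 * \<beta> (\<theta>, x))" using tm th unfolding m_def by auto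
      then have "c \<le> exp (2 * \<beta> (\<theta>, x)) * K\<^sup>2 / (2 * x ^ 3)"
        unfolding c_def using Rpos[OF x] by (intro divide_right_mono mult_right_mono) simp_all
      then have "c * hdens \<alpha> U A (\<theta>, x) \<le> exp (2 * \<beta> (\<theta>, x)) * K\<^sup>2 / (2 * x ^ 3) * hdens \<alpha> U A (\<theta>, x)"
        using hnn[OF x, of \<theta>] by (rule mult_right_mono)
      then show "c * hdens \<alpha> U A (\<theta>, x) \<le> P (\<theta>, x)" using Plb[OF x, of \<theta>] by linarith
    qed
    moreover have "integral {0..1} (\<lambda>\<theta>. c * hdens \<alpha> U A (\<theta>, x)) = c * E x" unfolding Efun by simp
    moreover have "0 < c * E x" using cpos pos[OF x] by simp
    ultimately have "0 < integral {0..1} (\<lambda>\<theta>. P (\<theta>, x))" by linarith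
    then show "\<exists>y. (E has_real_derivative y) (at x) \<and> y < 0" using dE[OF x] by force
  qed
  have p1: "E Ri = 0 \<longrightarrow> (\<forall>R. R0 < R \<longrightarrow> E R = 0)" using zero[OF Ri] by blast
  have p2: "E Ri \<noteq> 0 \<longrightarrow> (\<forall>R1 R2. R0 < R1 \<and> R1 \<le> R2 \<longrightarrow> E R2 \<le> E R1)" using mono by blast
  have p3: "E Ri \<noteq> 0 \<and> K \<noteq> 0 \<longrightarrow> (\<forall>R1 R2. R0 < R1 \<and> R1 < R2 \<longrightarrow> E R2 < E R1)"
  proof (intro impI allI)
    fix R1 R2 assume a: "E Ri \<noteq> 0 \<and> K \<noteq> 0" and b: "R0 < R1 \<and> R1 < R2"
    have pos: "0 < E R" if "R0 < R" for R
    proof -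
      have "E R \<noteq> 0" using zero[OF that _ Ri] a by blast
      then show ?thesis using Enn[OF that] by simp
    qed
    show "E R2 < E R1" using strict[OF _ pos] a b by blast
  qed
  show ?thesis using p1 p2 p3 unfolding E_def by blast
qed

end
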